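(* Let $\mathcal{A}$ be a finite or countable alphabet, $\mathcal{M}$ a countable set of probability measures on $\mathcal{A}^\infty$, $w:\mathcal{M}\to(0,1]$ a prior with $\sum_\nu w_\nu=1$, $\xi$ the Bayes mixture, $\mu\in\mathcal{M}$, and $\delta\in(0,1]$. Define $\hat d_t$ and $\hat h_t$ (with this $\delta$) as in the context. Then $$\mu(\forall t: d_t\le\hat d_t)\ge 1-\delta\qquad\text{and}\qquad \mu(\forall t: h_t\le\hat h_t)\ge1-\delta.$$
   Context: $\mathcal{A}^\infty$ carries the $\sigma$-algebra generated by cylinders $\Gamma_x=\{x\omega\}$; for a measure $\rho$, $\rho(x):=\rho(\Gamma_x)$, $\rho(y|x):=\rho(xy)/\rho(x)$, and for $\omega\in\mathcal{A}^\infty$, $\rho_{<t}(\omega):=\rho(\omega_{<t})$ with $\omega_{<t}=\omega_1\cdots\omega_{t-1}$. Bayes mixture $\xi(A):=\sum_\nu w_\nu\nu(A)$; posterior $w_\nu(x):=w_\nu\nu(x)/\xi(x)$. Logs natural. For a finite string $x$ and measures $\rho,\xi$: squared Hellinger distance $h_x(\rho,\xi):=\sum_{a\in\mathcal{A}}(\sqrt{\rho(a|x)}-\sqrt{\xi(a|x)})^2$ and KL divergence $d_x(\rho,\xi):=\sum_a\rho(a|x)\ln\frac{\rho(a|x)}{\xi(a|x)}$; random variables $h_t(\rho,\xi)(\omega):=h_{\omega_{<t}}(\rho,\xi)$, $d_t(\rho,\xi)(\omega):=d_{\omega_{<t}}(\rho,\xi)$. Set $d_t:=d_t(\mu,\xi)$,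 $h_t:=h_t(\mu,\xi)$, $c_t(\omega):=\sum_{\nu}w_\nu(\omega_{<t})d_{\omega_{<t}}(\nu,\xi)$. Plausible classes: $\mathcal{M}_t:=\{\nu\in\mathcal{M}:\forall\tau\le t,\ \nu_{<\tau}/\xi_{<\tau}\ge\delta w_\mu/w_\nu\}$ (a random set). Define $\hat d_t:=\frac{c_t}{w_\mu\delta}$ and $\hat h_t:=\sup_{\nu\in\mathcal{M}_t}\left\{\frac{w_\nu}{w_\mu}h_t(\nu,\xi)\right\}$. *)

theory Defs
  imports "HOL-Probability.Probability"
begin

text \<open>Sequences in A^infinity are streams over a countable type 'a; the measurable
space is stream_space (count_space UNIV), generated by cylinders.\<close>

definition cyl :: "'a list \<Rightarrow> 'a stream set" where
  "cyl x = {\<omega>. stake (length x) \<omega> = x}"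

definition pr :: "'a stream measure \<Rightarrow> 'a list \<Rightarrow> real" where
  "pr \<rho> x = measure \<rho> (cyl x)"

definition mix :: "'a stream measure set \<Rightarrow> ('a stream measure \<Rightarrow> real) \<Rightarrow> 'a list \<Rightarrow> real" where
  "mix M w x = (\<Sum>\<^sub>\<infinity>\<nu>\<in>M. w \<nu> * pr \<nu> x)"

definition cond :: "('a list \<Rightarrow> real) \<Rightarrow> 'a \<Rightarrow> 'a list \<Rightarrow> real" where
  "cond f a x = f (x @ [a]) / f x"

definition hell :: "('a list \<Rightarrow> real) \<Rightarrow> ('a list \<Rightarrow> real) \<Rightarrow> 'a list \<Rightarrow> real" where
  "hell f g x = (\<Sum>\<^sub>\<infinity>a\<in>UNIV. (sqrt (cond f a x) - sqrt (cond g a x))^2)"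

definition kl :: "('a list \<Rightarrow> real) \<Rightarrow> ('a list \<Rightarrow> real) \<Rightarrow> 'a list \<Rightarrow> real" where
  "kl f g x = (\<Sum>\<^sub>\<infinity>a\<in>UNIV. cond f a x * ln (cond f a x / cond g a x))"

definition post :: "'a stream measure set \<Rightarrow> ('a stream measure \<Rightarrow> real) \<Rightarrow> 'a stream measure \<Rightarrow> 'a list \<Rightarrow> real" where
  "post M w \<nu> x = w \<nu> * pr \<nu> x / mix M w x"

text \<open>omega_{<t} = omega_1 ... omega_{t-1}  (t \<ge> 1)\<close>
definition pre :: "'a stream \<Rightarrow> nat \<Rightarrow> 'a list" where
  "pre \<omega> t = stake (t - 1) \<omega>"

definition ct :: "'a stream measure set \<Rightarrow> ('a stream measure \<Rightarrow> real) \<Rightarrow> 'a stream \<Rightarrow> nat \<Rightarrow> ennreal" where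
  "ct M w \<omega> t = (\<Sum>\<^sub>\<infinity>\<nu>\<in>M. ennreal (post M w \<nu> (pre \<omega> t) * kl (pr \<nu>) (mix M w) (pre \<omega> t)))"

definition Mt :: "'a stream measure set \<Rightarrow> ('a stream measure \<Rightarrow> real) \<Rightarrow> 'a stream measure \<Rightarrow> real
    \<Rightarrow> 'a stream \<Rightarrow> nat \<Rightarrow> 'a stream measure set" where
  "Mt M w \<mu> \<delta> \<omega> t = {\<nu>\<in>M. \<forall>\<tau>. 1 \<le> \<tau> \<and> \<tau> \<le> t \<longrightarrow>
      pr \<nu> (pre \<omega> \<tau>) / mix M w (pre \<omega> \<tau>) \<ge> \<delta> * w \<mu> / w \<nu>}"

definition dhat :: "'a stream measure set \<Rightarrow> ('a stream measure \<Rightarrow> real) \<Rightarrow> 'a stream measure \<Rightarrow> real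
    \<Rightarrow> 'a stream \<Rightarrow> nat \<Rightarrow> ennreal" where
  "dhat M w \<mu> \<delta> \<omega> t = ct M w \<omega> t / ennreal (w \<mu> * \<delta>)"

text \<open>hat h_t = sup over M_t of (w_nu/w_mu) h_t(nu,xi); sup of the empty set is 0\<close>
definition hhat :: "'a stream measure set \<Rightarrow> ('a stream measure \<Rightarrow> real) \<Rightarrow> 'a stream measure \<Rightarrow> real
    \<Rightarrow> 'a stream \<Rightarrow> nat \<Rightarrow> ennreal" where
  "hhat M w \<mu> \<delta> \<omega> t = (SUP \<nu>\<in>Mt M w \<mu> \<delta> \<omega> t.
      ennreal (w \<nu> / w \<mu> * hell (pr \<nu>) (mix M w) (pre \<omega> t)))"

end

theory Submission
  imports Defs
begin

abbreviation SS :: "('a::countable) stream measure" where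
  "SS \<equiv> stream_space (count_space UNIV)"

lemma space_SS: "space (SS::('a::countable) stream measure) = UNIV"
  by (simp add: space_stream_space)

lemma cyl_sets: "cyl (x::('a::countable) list) \<in> sets SS"
proof -
  have "cyl x = {\<omega> \<in> space SS. stake (length x) \<omega> = x}"
    by (auto simp: cyl_def space_SS)
  also have "\<dots> \<in> sets SS" by measurable
  finally show ?thesis .
qed

lemma stake_dep_sets:
  assumes "\<And>\<omega> \<omega>'. stake n \<omega> = stake n \<omega>' \<Longrightarrow> P \<omega> = P \<omega>'"
  shows "{\<omega> \<in> space SS. P \<omega>} \<in> sets (SS::('a::countable) stream measure)"
proof -
  let ?Q = "{x. \<exists>\<omega>'. stake n \<omega>' = x \<and> P \<omega>'}"
  have "{\<omega> \<in> space SS. P \<omega>} = {\<omega> \<in> space SS. stake n \<omega> \<in> ?Q}"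
    using assms by blast
  also have "\<dots> \<in> sets (SS::('a::countable) stream measure)" by measurable
  finally show ?thesis .
qed

lemma stake_eq_le:
  assumes "stake n \<omega> = stake n \<omega>'" "m \<le> n"
  shows "stake m \<omega> = stake m \<omega>'"
proof -
  have "take m (stake n \<omega>) = take m (stake n \<omega>')" using assms by simp
  thus ?thesis using assms(2) by (simp add: take_stake min_def)
qed

lemma prefix_free:
  fixes F :: "'a list set"
  assumes "finite F"
  shows "\<exists>F'\<subseteq>F. finite F' \<and> (\<Union>x\<in>F. cyl x) = (\<Union>x\<in>F'. cyl x) \<and> disjoint_family_on cyl F'"
proof -
  define F' where "F' = {x\<in>F. \<forall>y\<in>F. length y \<le> length x \<and> take (length y) x = y \<longrightarrow> y = x}"
  have sub: "F' \<subseteq> F" unfolding F'_def by auto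
  have F'D: "y = x" if "x \<in> F'" "y \<in> F" "length y \<le> length x" "take (length y) x = y" for x y
    using that unfolding F'_def by blast
  have pre: "\<omega> \<in> cyl z" if "\<omega> \<in> cyl y" "length z \<le> length y" "take (length z) y = z" for \<omega> y z
  proof -
    have "stake (length z) \<omega> = take (length z) (stake (length y) \<omega>)"
      using that(2) by (simp add: take_stake min_def)
    thus ?thesis using that by (simp add: cyl_def)
  qed
  have U: "(\<Union>x\<in>F. cyl x) = (\<Union>x\<in>F'. cyl x)"
  proof
    show "(\<Union>x\<in>F'. cyl x) \<subseteq> (\<Union>x\<in>F. cyl x)" using sub by auto
  next
    show "(\<Union>x\<in>F. cyl x) \<subseteq> (\<Union>x\<in>F'. cyl x)"
    proof
      fix \<omega> assume "\<omega> \<in> (\<Union>x\<in>F. cyl x)"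
      then obtain x where x: "x \<in> F" "\<omega> \<in> cyl x" by auto
      obtain y where y: "y \<in> F \<and> \<omega> \<in> cyl y" and ymin: "\<forall>z. z \<in> F \<and> \<omega> \<in> cyl z \<longrightarrow> length y \<le> length z"
        using ex_has_least_nat[of "\<lambda>y. y \<in> F \<and> \<omega> \<in> cyl y" x length] x by blast
      have "y \<in> F'"
        unfolding F'_def
      proof (intro CollectI conjI ballI impI)
        show "y \<in> F" using y by blast
        fix z assume z: "z \<in> F" "length z \<le> length y \<and> take (length z) y = z"
        hence "\<omega> \<in> cyl z" using pre y by blast
        hence "length y \<le> length z" using ymin z by blast
        moreover have zl: "length z \<le> length y" using z by blast
        ultimately have eq: "length z = length y" by (rule antisym[rotated])
        have zz: "take (length z) y = z" using z by blast
        show "z = y" by (metis zz eq take_all order_refl)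
      qed
      thus "\<omega> \<in> (\<Union>x\<in>F'. cyl x)" using y by blast
    qed
  qed
  have D: "disjoint_family_on cyl F'"
    unfolding disjoint_family_on_def
  proof (intro ballI impI)
    fix x y assume xy: "x \<in> F'" "y \<in> F'" "x \<noteq> y"
    show "cyl x \<inter> cyl y = {}"
    proof (rule ccontr)
      assume "cyl x \<inter> cyl y \<noteq> {}"
      then obtain \<omega> where w: "\<omega> \<in> cyl x" "\<omega> \<in> cyl y" by blast
      show False
      proof (cases "length x \<le> length y")
        case True
        have sy: "stake (length y) \<omega> = y" and sx: "stake (length x) \<omega> = x" using w by (simp_all add: cyl_def)
        have "take (length x) y = x" using take_stake[of "length x" "length y" \<omega>] sy sx True by (simp add: min_def)
        then have "x = y" using F'D[of y x] xy True sub by blast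
        thus False using xy by simp
      next
        case False
        have sy: "stake (length y) \<omega> = y" and sx: "stake (length x) \<omega> = x" using w by (simp_all add: cyl_def)
        have "take (length y) x = y" using take_stake[of "length y" "length x" \<omega>] sy sx False by (simp add: min_def)
        then have "y = x" using F'D[of x y] xy False sub by auto
        thus False using xy by simp
      qed
    qed
  qed
  show ?thesis
    by (rule exI[of _ F']) (use sub U D finite_subset[OF sub assms] in simp)
qed

lemma infsum_finite_sum:
  fixes f :: "'i \<Rightarrow> 'b \<Rightarrow> real"
  assumes "finite F" "\<And>i. i \<in> F \<Longrightarrow> f i summable_on A"
  shows "(\<lambda>x. \<Sum>i\<in>F. f i x) summable_on A \<and> infsum (\<lambda>x. \<Sum>i\<in>F. f i x) A = (\<Sum>i\<in>F. infsum (f i) A)"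
  using assms
proof (induction F rule: finite_induct)
  case empty
  then show ?case by simp
next
  case (insert a F)
  have s1: "f a summable_on A" using insert by simp
  have s2: "(\<lambda>x. \<Sum>i\<in>F. f i x) summable_on A" using insert by simp
  have "(\<lambda>x. \<Sum>i\<in>insert a F. f i x) = (\<lambda>x. f a x + (\<Sum>i\<in>F. f i x))"
    using insert by simp
  then show ?case
    using summable_on_add[OF s1 s2] infsum_add[OF s1 s2] insert by simp
qed


context
  fixes M :: "('a::countable) stream measure set"
    and w :: "'a stream measure \<Rightarrow> real"
    and \<mu> :: "'a stream measure"
    and \<delta> :: real
  assumes cM: "countable M"
    and PS: "\<And>\<nu>. \<nu> \<in> M \<Longrightarrow> prob_space \<nu>"
    and SE: "\<And>\<nu>. \<nu> \<in> M \<Longrightarrow> sets \<nu> = sets (stream_space (count_space UNIV))"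
    and WP: "\<And>\<nu>. \<nu> \<in> M \<Longrightarrow> 0 < w \<nu> \<and> w \<nu> \<le> 1"
    and WS: "(w has_sum 1) M"
    and MU: "\<mu> \<in> M"
    and D0: "0 < \<delta>" and D1: "\<delta> \<le> 1"
begin

lemma pr_nonneg: "0 \<le> pr \<nu> x"
  by (simp add: pr_def)

lemma pr_le1: "\<nu> \<in> M \<Longrightarrow> pr \<nu> x \<le> 1"
  unfolding pr_def using PS prob_space.prob_le_1 by blast

lemma w_summ: "w summable_on M"
  using WS summable_on_def by blast

lemma w_inf: "infsum w M = 1"
  using WS by (simp add: has_sum_iff)

lemma term_summ: "(\<lambda>\<nu>. w \<nu> * pr \<nu> x) summable_on M"
proof (rule summable_on_comparison_test[OF w_summ])
  fix \<nu> assume "\<nu> \<in> M"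
  then show "w \<nu> * pr \<nu> x \<le> w \<nu>" "0 \<le> w \<nu> * pr \<nu> x"
    using WP[of \<nu>] pr_le1[of \<nu> x] pr_nonneg[of \<nu> x] by (auto simp: mult_left_le)
qed

lemma mix_nonneg: "0 \<le> mix M w x"
  unfolding mix_def
  by (intro infsum_nonneg) (metis WP pr_nonneg less_imp_le mult_nonneg_nonneg)

lemma wpr_nonneg: "\<nu> \<in> M \<Longrightarrow> 0 \<le> w \<nu> * pr \<nu> x"
  by (metis WP pr_nonneg less_imp_le mult_nonneg_nonneg)

lemma mix_ge: "w \<mu> * pr \<mu> x \<le> mix M w x"
proof -
  have "infsum (\<lambda>\<nu>. w \<nu> * pr \<nu> x) {\<mu>} \<le> infsum (\<lambda>\<nu>. w \<nu> * pr \<nu> x) M"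
    by (rule infsum_mono_neutral) (use MU term_summ wpr_nonneg in auto)
  thus ?thesis by (simp add: mix_def)
qed

lemma cyl_sets_nu: "\<nu> \<in> M \<Longrightarrow> cyl x \<in> sets \<nu>"
  using SE cyl_sets by blast

lemma finite_bound:
  assumes F: "finite F" and le: "\<And>x. x \<in> F \<Longrightarrow> pr \<mu> x \<le> \<delta> * mix M w x"
  shows "measure \<mu> (\<Union>x\<in>F. cyl x) \<le> \<delta>"
proof -
  obtain F' where F': "F' \<subseteq> F" "finite F'" "(\<Union>x\<in>F. cyl x) = (\<Union>x\<in>F'. cyl x)" "disjoint_family_on cyl F'"
    using prefix_free[OF F] by blast
  have U: "measure \<nu> (\<Union>x\<in>F'. cyl x) = (\<Sum>x\<in>F'. pr \<nu> x)" if "\<nu> \<in> M" for \<nu>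
  proof -
    interpret P: prob_space \<nu> using PS that by blast
    show ?thesis unfolding pr_def
      by (rule P.finite_measure_finite_Union) (use F' cyl_sets_nu[OF that] in auto)
  qed
  have "measure \<mu> (\<Union>x\<in>F. cyl x) = (\<Sum>x\<in>F'. pr \<mu> x)" using U[OF MU] F' by simp
  also have "\<dots> \<le> (\<Sum>x\<in>F'. \<delta> * mix M w x)" using le F' by (intro sum_mono) auto
  also have "\<dots> = \<delta> * (\<Sum>x\<in>F'. mix M w x)" by (simp add: sum_distrib_left)
  also have "(\<Sum>x\<in>F'. mix M w x) = infsum (\<lambda>\<nu>. \<Sum>x\<in>F'. w \<nu> * pr \<nu> x) M"
    unfolding mix_def using infsum_finite_sum[of F' "\<lambda>x \<nu>. w \<nu> * pr \<nu> x" M] F' term_summ by simp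
  also have "\<dots> = infsum (\<lambda>\<nu>. w \<nu> * measure \<nu> (\<Union>x\<in>F'. cyl x)) M"
    by (rule infsum_cong) (simp add: U sum_distrib_left)
  also have "\<dots> \<le> infsum w M"
  proof (rule infsum_mono)
    have b: "w \<nu> * measure \<nu> (\<Union>x\<in>F'. cyl x) \<le> w \<nu> \<and> 0 \<le> w \<nu> * measure \<nu> (\<Union>x\<in>F'. cyl x)" if "\<nu> \<in> M" for \<nu>
    proof -
      interpret P: prob_space \<nu> using PS that by blast
      show ?thesis using WP[OF that] P.prob_le_1 by (auto simp: mult_left_le)
    qed
    show "(\<lambda>\<nu>. w \<nu> * measure \<nu> (\<Union>x\<in>F'. cyl x)) summable_on M"
      by (rule summable_on_comparison_test[OF w_summ]) (use b in auto)
    show "w summable_on M" by (rule w_summ)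
    show "\<And>\<nu>. \<nu> \<in> M \<Longrightarrow> w \<nu> * measure \<nu> (\<Union>x\<in>F'. cyl x) \<le> w \<nu>" using b by blast
  qed
  finally show ?thesis using w_inf D0 by (simp add: mult_left_le)
qed


lemma main_aux:
  shows "measure \<mu> {\<omega> \<in> space \<mu>. \<forall>t\<ge>1.
            ennreal (kl (pr \<mu>) (mix M w) (pre \<omega> t)) \<le> dhat M w \<mu> \<delta> \<omega> t} \<ge> 1 - \<delta>
       \<and> measure \<mu> {\<omega> \<in> space \<mu>. \<forall>t\<ge>1.
            ennreal (hell (pr \<mu>) (mix M w) (pre \<omega> t)) \<le> hhat M w \<mu> \<delta> \<omega> t} \<ge> 1 - \<delta>"
proof -
  interpret P: prob_space \<mu> using PS MU by blast
  have spm: "space \<mu> = space SS" using sets_eq_imp_space_eq[OF SE[OF MU]] .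
  define L where "L = {x. pr \<mu> x < \<delta> * mix M w x \<or> pr \<mu> x \<le> 0}"
  have Lle: "pr \<mu> x \<le> \<delta> * mix M w x" if "x \<in> L" for x
  proof -
    have "0 \<le> \<delta> * mix M w x" using D0 mix_nonneg by simp
    thus ?thesis using that pr_nonneg[of \<mu> x] unfolding L_def by auto
  qed
  define C where "C N = (\<Union>x\<in>{x\<in>L. to_nat x < N}. cyl x)" for N
  have finC: "finite {x\<in>L. to_nat x < N}" for N
  proof (rule finite_subset[of _ "from_nat ` {..<N}"])
    show "{x \<in> L. to_nat x < N} \<subseteq> from_nat ` {..<N}"
    proof
      fix x assume "x \<in> {x \<in> L. to_nat x < N}"
      then show "x \<in> from_nat ` {..<N}" by (intro image_eqI[of _ _ "to_nat x"]) auto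
    qed
  qed simp
  have Cle: "measure \<mu> (C N) \<le> \<delta>" for N
    unfolding C_def by (rule finite_bound[OF finC]) (use Lle in auto)
  have Cs: "C N \<in> sets \<mu>" for N
    unfolding C_def using finC[of N] cyl_sets_nu[OF MU] by (intro sets.finite_UN) auto
  have inc: "incseq C" unfolding C_def by (intro monoI) auto
  define B where "B = (\<Union>N. C N)"
  have Bs: "B \<in> sets \<mu>" unfolding B_def using Cs by blast
  have "(\<lambda>N. measure \<mu> (C N)) \<longlonglongrightarrow> measure \<mu> B"
    unfolding B_def by (rule P.finite_Lim_measure_incseq) (use Cs inc in auto)
  hence Ble: "measure \<mu> B \<le> \<delta>" by (rule LIMSEQ_le_const2) (use Cle in auto)
  define G where "G = space \<mu> - B"
  have Gm: "measure \<mu> G \<ge> 1 - \<delta>" unfolding G_def using P.prob_compl[OF Bs] Ble by simp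
  have good: "0 < pr \<mu> (stake n \<omega>) \<and> \<delta> * mix M w (stake n \<omega>) \<le> pr \<mu> (stake n \<omega>)"
    if "\<omega> \<in> G" for \<omega> n
  proof -
    have "stake n \<omega> \<notin> L"
    proof
      assume "stake n \<omega> \<in> L"
      hence "\<omega> \<in> C (Suc (to_nat (stake n \<omega>)))" unfolding C_def cyl_def by auto
      thus False using that unfolding G_def B_def by blast
    qed
    thus ?thesis unfolding L_def by auto
  qed
  have mixpos: "0 < mix M w (stake n \<omega>)" if "\<omega> \<in> G" for \<omega> n
  proof -
    have "0 < w \<mu> * pr \<mu> (stake n \<omega>)" using good[OF that, of n] WP[OF MU] by simp
    thus ?thesis using mix_ge[of "stake n \<omega>"] by linarith
  qed
  have ratio: "\<delta> \<le> pr \<mu> (stake n \<omega>) / mix M w (stake n \<omega>)" if "\<omega> \<in> G" for \<omega> n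
    using good[OF that, of n] mixpos[OF that, of n] by (simp add: pos_le_divide_eq)
  have wpos: "0 < w \<mu>" using WP[OF MU] by simp
  have T1: "G \<subseteq> {\<omega> \<in> space \<mu>. \<forall>t\<ge>1.
            ennreal (kl (pr \<mu>) (mix M w) (pre \<omega> t)) \<le> dhat M w \<mu> \<delta> \<omega> t}"
    (is "_ \<subseteq> {\<omega> \<in> _. \<forall>t\<ge>1. ?P \<omega> t}")
  proof (intro subsetI CollectI conjI)
    fix \<omega> assume \<omega>: "\<omega> \<in> G"
    show "\<omega> \<in> space \<mu>" using \<omega> unfolding G_def by blast
    show "\<forall>t\<ge>1. ?P \<omega> t"
    proof (intro allI impI)
    fix t :: nat assume t: "1 \<le> t"
    define x where "x = pre \<omega> t"
    have x: "x = stake (t-1) \<omega>" unfolding x_def pre_def by simp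
    define k where "k = kl (pr \<mu>) (mix M w) x"
    define p where "p = post M w \<mu> x"
    have pge: "w \<mu> * \<delta> \<le> p"
    proof -
      have "w \<mu> * \<delta> \<le> w \<mu> * (pr \<mu> x / mix M w x)"
        using mult_left_mono[OF ratio[OF \<omega>, of "t-1"] less_imp_le[OF wpos]] x by simp
      thus ?thesis unfolding p_def post_def by simp
    qed
    have ct: "ennreal (p * k) \<le> ct M w \<omega> t"
    proof -
      have "infsum (\<lambda>\<nu>. ennreal (post M w \<nu> (pre \<omega> t) * kl (pr \<nu>) (mix M w) (pre \<omega> t))) {\<mu>}
          \<le> infsum (\<lambda>\<nu>. ennreal (post M w \<nu> (pre \<omega> t) * kl (pr \<nu>) (mix M w) (pre \<omega> t))) M"
        by (rule infsum_mono_neutral) (use MU in \<open>auto intro: nonneg_summable_on_complete\<close>)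
      thus ?thesis unfolding ct_def p_def k_def x_def by simp
    qed
    show "ennreal (kl (pr \<mu>) (mix M w) (pre \<omega> t)) \<le> dhat M w \<mu> \<delta> \<omega> t"
    proof (cases "k \<le> 0")
      case True
      have "ennreal k = 0" using True by (simp add: ennreal_eq_0_iff)
      thus ?thesis by (simp add: k_def x_def)
    next
      case False
      have wd: "0 < w \<mu> * \<delta>" using wpos D0 by simp
      have "k \<le> p * k / (w \<mu> * \<delta>)"
        using False pge wd by (simp add: pos_le_divide_eq mult_right_mono mult.commute)
      hence "ennreal k \<le> ennreal (p * k / (w \<mu> * \<delta>))" by (rule ennreal_leI)
      also have "\<dots> = ennreal (p * k) / ennreal (w \<mu> * \<delta>)"
        using False pge wd by (subst divide_ennreal) auto
      also have "\<dots> \<le> ct M w \<omega> t / ennreal (w \<mu> * \<delta>)"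
        by (rule divide_right_mono_ennreal[OF ct])
      finally show ?thesis unfolding dhat_def k_def x_def .
    qed
    qed
  qed
  have T2: "G \<subseteq> {\<omega> \<in> space \<mu>. \<forall>t\<ge>1.
            ennreal (hell (pr \<mu>) (mix M w) (pre \<omega> t)) \<le> hhat M w \<mu> \<delta> \<omega> t}"
    (is "_ \<subseteq> {\<omega> \<in> _. \<forall>t\<ge>1. ?P \<omega> t}")
  proof (intro subsetI CollectI conjI)
    fix \<omega> assume \<omega>: "\<omega> \<in> G"
    show "\<omega> \<in> space \<mu>" using \<omega> unfolding G_def by blast
    show "\<forall>t\<ge>1. ?P \<omega> t"
    proof (intro allI impI)
    fix t :: nat assume t: "1 \<le> t"
    have "\<mu> \<in> Mt M w \<mu> \<delta> \<omega> t"
      unfolding Mt_def pre_def using MU ratio[OF \<omega>] wpos by auto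
    hence "ennreal (w \<mu> / w \<mu> * hell (pr \<mu>) (mix M w) (pre \<omega> t)) \<le> hhat M w \<mu> \<delta> \<omega> t"
      unfolding hhat_def by (rule SUP_upper)
    thus "ennreal (hell (pr \<mu>) (mix M w) (pre \<omega> t)) \<le> hhat M w \<mu> \<delta> \<omega> t" using wpos by simp
    qed
  qed
  have meas1: "{\<omega> \<in> space \<mu>. \<forall>t\<ge>1.
            ennreal (kl (pr \<mu>) (mix M w) (pre \<omega> t)) \<le> dhat M w \<mu> \<delta> \<omega> t} \<in> sets \<mu>"
    unfolding SE[OF MU] spm
  proof (rule sets.sets_Collect_countable_All)
    fix t :: nat
    show "{\<omega> \<in> space SS. 1 \<le> t \<longrightarrow> ennreal (kl (pr \<mu>) (mix M w) (pre \<omega> t)) \<le> dhat M w \<mu> \<delta> \<omega> t} \<in> sets SS"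
      by (rule stake_dep_sets[where n="t-1"]) (simp add: dhat_def ct_def pre_def)
  qed
  have meas2: "{\<omega> \<in> space \<mu>. \<forall>t\<ge>1.
            ennreal (hell (pr \<mu>) (mix M w) (pre \<omega> t)) \<le> hhat M w \<mu> \<delta> \<omega> t} \<in> sets \<mu>"
    unfolding SE[OF MU] spm
  proof (rule sets.sets_Collect_countable_All)
    fix t :: nat
    show "{\<omega> \<in> space SS. 1 \<le> t \<longrightarrow> ennreal (hell (pr \<mu>) (mix M w) (pre \<omega> t)) \<le> hhat M w \<mu> \<delta> \<omega> t} \<in> sets SS"
    proof (rule stake_dep_sets[where n="t-1"])
      fix \<omega> \<omega>' :: "'a stream" assume eq: "stake (t-1) \<omega> = stake (t-1) \<omega>'"
      have "\<And>\<tau>. \<tau> \<le> t \<Longrightarrow> stake (\<tau>-1) \<omega> = stake (\<tau>-1) \<omega>'"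
        using stake_eq_le[OF eq] by simp
      hence "Mt M w \<mu> \<delta> \<omega> t = Mt M w \<mu> \<delta> \<omega>' t" unfolding Mt_def pre_def by auto
      thus "(1 \<le> t \<longrightarrow> ennreal (hell (pr \<mu>) (mix M w) (pre \<omega> t)) \<le> hhat M w \<mu> \<delta> \<omega> t) =
            (1 \<le> t \<longrightarrow> ennreal (hell (pr \<mu>) (mix M w) (pre \<omega>' t)) \<le> hhat M w \<mu> \<delta> \<omega>' t)"
        unfolding hhat_def pre_def using eq by simp
    qed
  qed
  show ?thesis
    using P.finite_measure_mono[OF T1 meas1] P.finite_measure_mono[OF T2 meas2] Gm by linarith
qed

end

theorem theorem6:
  fixes M :: "('a::countable) stream measure set"
    and w :: "'a stream measure \<Rightarrow> real"
    and \<mu> :: "'a stream measure"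
    and \<delta> :: real
  assumes "countable M"
    and "\<And>\<nu>. \<nu> \<in> M \<Longrightarrow> prob_space \<nu>"
    and "\<And>\<nu>. \<nu> \<in> M \<Longrightarrow> sets \<nu> = sets (stream_space (count_space UNIV))"
    and "\<And>\<nu>. \<nu> \<in> M \<Longrightarrow> 0 < w \<nu> \<and> w \<nu> \<le> 1"
    and "(w has_sum 1) M"
    and "\<mu> \<in> M"
    and "0 < \<delta>" and "\<delta> \<le> 1"
  shows "measure \<mu> {\<omega> \<in> space \<mu>. \<forall>t\<ge>1.
            ennreal (kl (pr \<mu>) (mix M w) (pre \<omega> t)) \<le> dhat M w \<mu> \<delta> \<omega> t} \<ge> 1 - \<delta>
       \<and> measure \<mu> {\<omega> \<in> space \<mu>. \<forall>t\<ge>1.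
            ennreal (hell (pr \<mu>) (mix M w) (pre \<omega> t)) \<le> hhat M w \<mu> \<delta> \<omega> t} \<ge> 1 - \<delta>"
  by (rule main_aux[OF assms])

end
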